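(* Let $n\in\mathbb{N}$, let $c=(c_{i,j})$ be an $n\times(n+1)$ matrix with entries in $\{0,1\}$, $\sigma_1,\ldots,\sigma_n>0$, and $\gamma_1,\ldots,\gamma_{n+1}>0$ with $\sum_jc_{i,j}\gamma_j>0$ for every $i$. Let $\boldsymbol{\Lambda}=(\Lambda_1,\ldots,\Lambda_{n+1})'$ have independent coordinates $\Lambda_j\sim Ga(\gamma_j,1)$. Let $W_{i,j}$, $i=1,\ldots,n$, $j=1,\ldots,n+1$, be random variables that are exponential with randomized rates, $W_{i,j}*\Lambda_j$: conditionally on $\boldsymbol{\Lambda}=(\lambda_1,\ldots,\lambda_{n+1})$, the $W_{i,j}$ are mutually independent and $W_{i,j}\sim Exp(\lambda_j)$. Set, for $i=1,\ldots,n$, \[ X_i=\sigma_i\min_{j\in\{1,\ldots,n+1\}:\,c_{i,j}\ne0}\left(W_{i,j}*\Lambda_j\right). \] Then $\mathbf{X}=(X_1,\ldots,X_n)'$ satisfies \[ \mathbf{P}[X_1>x_1,\ldots,X_n>x_n]=\prod_{j=1}^{n+1}\left(1+\sum_{i=1}^n\frac{c_{i,j}}{\sigma_i}x_i\right)^{-\gamma_j},\quad (x_1,\ldots,x_n)'\in(0,\infty)^n. \]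
   Context: $Exp(\lambda)$ is the exponential distribution with rate $\lambda$; $Ga(\gamma,1)$ is the gamma distribution with shape $\gamma$ and rate $1$. The mixture operator $*$: for a family $X_\lambda\sim C(\cdot;\lambda)$ and a random parameter $\Lambda\sim H$, $X_\lambda*\Lambda$ denotes the random variable $X_\Lambda$, i.e. with conditional law $C(\cdot;\lambda)$ given $\Lambda=\lambda$. *)

theory Defs
  imports "HOL-Probability.Probability"
begin

definition gamma_density :: "real \<Rightarrow> real \<Rightarrow> real" where
  "gamma_density a x = (if 0 < x then x powr (a - 1) * exp (- x) / Gamma a else 0)"

text \<open>Law of Lambda = (Lambda_0,...,Lambda_n): independent Ga(gamma_j,1) coordinates
  (indices j < n+1, 0-based).\<close>
definition Lam_law :: "nat \<Rightarrow> (nat \<Rightarrow> real) \<Rightarrow> (nat \<Rightarrow> real) measure" where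
  "Lam_law n \<gamma> = PiM {..<Suc n} (\<lambda>j. density lborel (gamma_density (\<gamma> j)))"

definition W_kernel :: "nat \<Rightarrow> (nat \<Rightarrow> real) \<Rightarrow> (nat \<times> nat \<Rightarrow> real) measure" where
  "W_kernel n l = PiM ({..<n} \<times> {..<Suc n}) (\<lambda>(i, j). density lborel (exponential_density (l j)))"

definition Lam_space :: "nat \<Rightarrow> (nat \<Rightarrow> real) measure" where
  "Lam_space n = PiM {..<Suc n} (\<lambda>_. borel)"

definition W_space :: "nat \<Rightarrow> (nat \<times> nat \<Rightarrow> real) measure" where
  "W_space n = PiM ({..<n} \<times> {..<Suc n}) (\<lambda>_. borel)"

definition joint_law :: "nat \<Rightarrow> (nat \<Rightarrow> real) \<Rightarrow> ((nat \<Rightarrow> real) \<times> (nat \<times> nat \<Rightarrow> real)) measure" where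
  "joint_law n \<gamma> = Lam_law n \<gamma> \<bind>
      (\<lambda>l. distr (W_kernel n l) (Lam_space n \<Otimes>\<^sub>M W_space n) (\<lambda>w. (l, w)))"

end

theory Submission
  imports Defs
begin


lemma gamma_mgf:
  fixes g s :: real
  assumes g: "0 < g" and s: "0 \<le> s"
  shows "(\<integral>\<^sup>+a. ennreal (gamma_density g a) * ennreal (if 0 < a then exp (- a * s) else 0) \<partial>lborel)
         = ennreal ((1 + s) powr (- g))"
proof -
  define u where "u = 1 + s"
  have u: "0 < u" using s by (simp add: u_def)
  define G where "G = (\<lambda>a::real. indicator {0..} a * a powr (g - 1) * exp (- u * a))"
  have Gnn: "0 \<le> G a" for a by (simp add: G_def)
  have GM[measurable]: "G \<in> borel_measurable borel" unfolding G_def by measurable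
  have "ennreal (Gamma g) = (\<integral>\<^sup>+t. ennreal (indicator {0..} t * t powr (g - 1) / exp t) \<partial>lborel)"
    by (rule Gamma_conv_nn_integral_real[OF g])
  also have "\<dots> = ennreal \<bar>u\<bar> * (\<integral>\<^sup>+x. ennreal (indicator {0..} (0 + u * x) * (0 + u * x) powr (g - 1) / exp (0 + u * x)) \<partial>lborel)"
    by (rule nn_integral_real_affine) (use u in auto)
  also have "(\<lambda>x. ennreal (indicator {0..} (0 + u * x) * (0 + u * x) powr (g - 1) / exp (0 + u * x)))
      = (\<lambda>x. ennreal (u powr (g - 1)) * ennreal (G x))"
  proof
    fix x :: real
    show "ennreal (indicator {0..} (0 + u * x) * (0 + u * x) powr (g - 1) / exp (0 + u * x)) = ennreal (u powr (g - 1)) * ennreal (G x)"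
    proof (cases "0 \<le> x")
      case True
      then have "(u * x) powr (g - 1) = u powr (g - 1) * x powr (g - 1)"
        using u by (simp add: powr_mult)
      then show ?thesis using True u
        by (simp add: G_def ennreal_mult'[symmetric] exp_minus field_simps zero_le_mult_iff)
    next
      case False
      then have "\<not> 0 \<le> u * x" using u by (simp add: zero_le_mult_iff)
      then show ?thesis using False by (simp add: G_def)
    qed
  qed
  also have "ennreal \<bar>u\<bar> * (\<integral>\<^sup>+x. ennreal (u powr (g - 1)) * ennreal (G x) \<partial>lborel)
      = ennreal (u powr g) * (\<integral>\<^sup>+x. ennreal (G x) \<partial>lborel)"
  proof -
    have "(\<integral>\<^sup>+x. ennreal (u powr (g - 1)) * ennreal (G x) \<partial>lborel) = ennreal (u powr (g - 1)) * (\<integral>\<^sup>+x. ennreal (G x) \<partial>lborel)"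
      by (rule nn_integral_cmult) simp
    moreover have "\<bar>u\<bar> * u powr (g - 1) = u powr g" using u by (simp add: powr_diff)
    ultimately show ?thesis using u by (simp add: mult.assoc[symmetric] ennreal_mult'[symmetric])
  qed
  finally have eq: "ennreal (Gamma g) = ennreal (u powr g) * (\<integral>\<^sup>+x. ennreal (G x) \<partial>lborel)" .
  have Gpos: "0 < Gamma g" using g by (simp add: Gamma_real_pos)
  have upos: "0 < u powr g" using u by simp
  have IG: "(\<integral>\<^sup>+x. ennreal (G x) \<partial>lborel) = ennreal (Gamma g / u powr g)"
  proof -
    have "(\<integral>\<^sup>+x. ennreal (G x) \<partial>lborel) = ennreal (1 / u powr g) * (ennreal (u powr g) * (\<integral>\<^sup>+x. ennreal (G x) \<partial>lborel))"
      using upos by (simp add: mult.assoc[symmetric] ennreal_mult'[symmetric])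
    also have "\<dots> = ennreal (Gamma g / u powr g)"
      unfolding eq[symmetric] using upos Gpos by (simp add: ennreal_mult'[symmetric])
    finally show ?thesis .
  qed
  have "(\<integral>\<^sup>+a. ennreal (gamma_density g a) * ennreal (if 0 < a then exp (- a * s) else 0) \<partial>lborel)
      = (\<integral>\<^sup>+a. ennreal (1 / Gamma g) * ennreal (G a) \<partial>lborel)"
  proof (rule nn_integral_cong)
    fix a :: real
    show "ennreal (gamma_density g a) * ennreal (if 0 < a then exp (- a * s) else 0) = ennreal (1 / Gamma g) * ennreal (G a)"
    proof (cases "0 < a")
      case True
      have "exp (- a) * exp (- a * s) = exp (- u * a)" by (simp add: u_def exp_add[symmetric] algebra_simps)
      then show ?thesis using True Gpos
        by (simp add: gamma_density_def G_def ennreal_mult'[symmetric] field_simps)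
    next
      case False
      then show ?thesis by (cases "a = 0") (auto simp: gamma_density_def G_def)
    qed
  qed
  also have "\<dots> = ennreal (1 / Gamma g) * ennreal (Gamma g / u powr g)"
    by (simp add: nn_integral_cmult IG)
  also have "\<dots> = ennreal (u powr (- g))"
    using Gpos upos by (simp add: ennreal_mult'[symmetric] powr_minus divide_inverse)
  finally show ?thesis by (simp add: u_def)
qed



abbreviation EE :: "real \<Rightarrow> real measure" where
  "EE a \<equiv> density lborel (exponential_density a)"

lemma EE_le0: "a \<le> 0 \<Longrightarrow> emeasure (EE a) Y = 0"
proof -
  assume a: "a \<le> 0"
  have "emeasure (EE a) Y = emeasure (density lborel (\<lambda>_. 0::ennreal)) Y"
  proof (rule arg_cong2[where f=emeasure, OF _ refl], rule density_cong)
    show "AE x in lborel. ennreal (exponential_density a x) = 0"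
      using a by (auto simp: exponential_density_def ennreal_eq_0_iff mult_nonpos_nonneg)
  qed auto
  also have "\<dots> = 0"
    by (cases "Y \<in> sets (density lborel (\<lambda>_. 0::ennreal))")
       (simp_all add: emeasure_density_const emeasure_notin_sets)
  finally show ?thesis .
qed

lemma EE_sub: "subprob_space (EE a)"
proof (cases "0 < a")
  case True
  then show ?thesis by (intro prob_space_imp_subprob_space prob_space_exponential_density)
next
  case False
  then show ?thesis by (intro subprob_spaceI) (simp_all add: EE_le0)
qed

lemma EE_tail:
  assumes a: "0 < a" and t: "0 \<le> t"
  shows "emeasure (EE a) {t<..} = ennreal (exp (- a * t))"
proof -
  interpret prob_space "EE a" using a by (rule prob_space_exponential_density)
  have "{t<..} = space (EE a) - {..t}" by auto
  then have "emeasure (EE a) {t<..} = emeasure (EE a) (space (EE a)) - emeasure (EE a) {..t}"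
    using emeasure_compl[of "{..t}" "EE a"] by (simp add: emeasure_finite)
  also have "\<dots> = 1 - ennreal (1 - exp (- a * t))"
  proof -
    have "emeasure (EE a) {..t} = ennreal (1 - exp (- a * t))"
      using emeasure_erlang_density[OF a, of 0 t] t by (simp add: erlang_CDF_0)
    moreover have "emeasure (EE a) (space (EE a)) = 1" by (rule emeasure_space_1)
    ultimately show ?thesis by simp
  qed
  also have "\<dots> = ennreal (exp (- a * t))"
    using a t by (simp add: ennreal_1[symmetric] ennreal_minus del: ennreal_1)
  finally show ?thesis .
qed

lemma EE_meas[measurable]: "Y \<in> sets borel \<Longrightarrow> (\<lambda>a. emeasure (EE a) Y) \<in> borel_measurable borel"
proof -
  assume Y[measurable]: "Y \<in> sets borel"
  have "(\<lambda>a. emeasure (EE a) Y) = (\<lambda>a. \<integral>\<^sup>+x. ennreal (exponential_density a x) * indicator Y x \<partial>lborel)"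
    by (intro ext emeasure_density) auto
  also have "\<dots> \<in> borel_measurable borel"
    unfolding exponential_density_def by measurable
  finally show ?thesis .
qed

lemma WK_box:
  assumes Y: "\<And>k. k \<in> {..<n} \<times> {..<Suc n} \<Longrightarrow> Y k \<in> sets borel"
  shows "emeasure (W_kernel n l) (Pi\<^sub>E ({..<n} \<times> {..<Suc n}) Y)
       = (\<Prod>k\<in>{..<n} \<times> {..<Suc n}. emeasure (EE (l (snd k))) (Y k))"
proof -
  have sf: "sigma_finite_measure (EE a)" for a
    using EE_sub[of a] by (simp add: subprob_space_def finite_measure_def)
  interpret product_sigma_finite "\<lambda>(i, j). EE (l j)"
    by (simp add: product_sigma_finite_def case_prod_beta sf)
  show ?thesis unfolding W_kernel_def
    by (subst emeasure_PiM) (auto simp: Y split: prod.splits intro!: prod.cong)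
qed

lemma prod_le1_ennreal: "finite A \<Longrightarrow> (\<And>k. k \<in> A \<Longrightarrow> f k \<le> (1::ennreal)) \<Longrightarrow> prod f A \<le> 1"
  by (induction A rule: finite_induct) (auto intro: mult_le_one)

lemma WK_sub: "subprob_space (W_kernel n l)"
proof (rule subprob_spaceI)
  have sp: "space (W_kernel n l) = Pi\<^sub>E ({..<n} \<times> {..<Suc n}) (\<lambda>_. UNIV)"
    unfolding W_kernel_def space_PiM by (rule PiE_cong) (auto split: prod.splits)
  show "emeasure (W_kernel n l) (space (W_kernel n l)) \<le> 1"
    unfolding sp WK_box[of n "\<lambda>_. UNIV", simplified]
  proof (rule prod_le1_ennreal)
    fix k
    interpret subprob_space "EE (l (snd k))" by (rule EE_sub)
    show "emeasure (EE (l (snd k))) UNIV \<le> 1" using emeasure_space_le_1 by simp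
  qed simp
  show "space (W_kernel n l) \<noteq> {}" unfolding sp by (simp add: PiE_eq_empty_iff)
qed

lemma sets_WK: "sets (W_kernel n l) = sets (W_space n)"
  unfolding W_kernel_def W_space_def by (rule sets_PiM_cong) auto

lemma sets_Lam: "sets (Lam_law n g) = sets (Lam_space n)"
  unfolding Lam_law_def Lam_space_def by (rule sets_PiM_cong) auto

lemma comp_meas: "j < Suc n \<Longrightarrow> (\<lambda>l. l j) \<in> borel_measurable (Lam_law n g)"
proof -
  assume j: "j < Suc n"
  have "(\<lambda>l. l j) \<in> measurable (Lam_space n) borel"
    unfolding Lam_space_def using j by (intro measurable_component_singleton) auto
  then show ?thesis by (subst measurable_cong_sets[OF sets_Lam refl])
qed

lemma WK_meas: "W_kernel n \<in> measurable (Lam_law n g) (subprob_algebra (W_space n))"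
proof -
  let ?I = "{..<n} \<times> {..<Suc n}"
  let ?G = "prod_algebra ?I (\<lambda>_. borel :: real measure)"
  have G: "A \<in> ?G \<Longrightarrow> (\<lambda>l. emeasure (W_kernel n l) A) \<in> borel_measurable (Lam_law n g)" for A
  proof -
    assume "A \<in> ?G"
    then obtain Y where A: "A = Pi\<^sub>E ?I Y" and Y: "Y \<in> (\<Pi> j\<in>?I. sets borel)"
      by (auto simp: prod_algebra_eq_finite)
    have "(\<lambda>l. emeasure (W_kernel n l) A) = (\<lambda>l. \<Prod>k\<in>?I. emeasure (EE (l (snd k))) (Y k))"
      unfolding A using Y by (intro ext WK_box) auto
    also have "\<dots> \<in> borel_measurable (Lam_law n g)"
    proof (rule borel_measurable_prod_ennreal)
      fix k assume k: "k \<in> ?I"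
      have "(\<lambda>a. emeasure (EE a) (Y k)) \<in> borel_measurable borel" using Y k by (intro EE_meas) auto
      moreover have "(\<lambda>l. l (snd k)) \<in> borel_measurable (Lam_law n g)" using k by (intro comp_meas) auto
      ultimately show "(\<lambda>l. emeasure (EE (l (snd k))) (Y k)) \<in> borel_measurable (Lam_law n g)"
        using measurable_comp[of "\<lambda>l. l (snd k)" "Lam_law n g" borel "\<lambda>a. emeasure (EE a) (Y k)"]
        by (simp add: o_def)
    qed
    finally show ?thesis .
  qed
  show ?thesis
  proof (rule measurable_subprob_algebra_generated[where \<Omega>="Pi\<^sub>E ?I (\<lambda>_. space borel)" and G="?G"])
    show "sets (W_space n) = sigma_sets (Pi\<^sub>E ?I (\<lambda>_. space borel)) ?G"
      unfolding W_space_def by (rule sets_PiM)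
    show "Int_stable ?G" by (rule Int_stable_prod_algebra)
    show "?G \<subseteq> Pow (Pi\<^sub>E ?I (\<lambda>_. space borel))" by (rule prod_algebra_sets_into_space)
    show "subprob_space (W_kernel n a)" for a by (rule WK_sub)
    show "sets (W_kernel n a) = sets (W_space n)" for a by (rule sets_WK)
    show "A \<in> ?G \<Longrightarrow> (\<lambda>l. emeasure (W_kernel n l) A) \<in> borel_measurable (Lam_law n g)" for A by (rule G)
    show "(\<lambda>l. emeasure (W_kernel n l) (Pi\<^sub>E ?I (\<lambda>_. space borel))) \<in> borel_measurable (Lam_law n g)"
      by (rule G, rule space_in_prod_algebra)
  qed
qed

lemma K_meas: "(\<lambda>l. distr (W_kernel n l) (Lam_space n \<Otimes>\<^sub>M W_space n) (\<lambda>w. (l, w)))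
   \<in> measurable (Lam_law n g) (subprob_algebra (Lam_space n \<Otimes>\<^sub>M W_space n))"
proof (rule measurable_distr2[OF _ WK_meas])
  have "sets (Lam_law n g \<Otimes>\<^sub>M W_space n) = sets (Lam_space n \<Otimes>\<^sub>M W_space n)"
    using sets_Lam by (rule sets_pair_measure_cong) simp
  then have "(\<lambda>x. x) \<in> measurable (Lam_law n g \<Otimes>\<^sub>M W_space n) (Lam_space n \<Otimes>\<^sub>M W_space n)"
    by (rule measurable_ident_sets)
  then show "(\<lambda>(l, w). (l, w)) \<in> measurable (Lam_law n g \<Otimes>\<^sub>M W_space n) (Lam_space n \<Otimes>\<^sub>M W_space n)"
    by (simp add: case_prod_Pair_iden)
qed



lemma gam_prob: "0 < g \<Longrightarrow> prob_space (density lborel (gamma_density g))"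
proof (rule prob_spaceI)
  assume g: "0 < g"
  have "emeasure (density lborel (gamma_density g)) UNIV
      = (\<integral>\<^sup>+a. ennreal (gamma_density g a) * indicator UNIV a \<partial>lborel)"
    by (rule emeasure_density) (auto simp: gamma_density_def)
  also have "\<dots> = (\<integral>\<^sup>+a. ennreal (gamma_density g a) * ennreal (if 0 < a then exp (- a * 0) else 0) \<partial>lborel)"
    by (rule nn_integral_cong) (auto simp: gamma_density_def)
  also have "\<dots> = 1" using gamma_mgf[OF g, of 0] by simp
  finally show "emeasure (density lborel (gamma_density g)) (space (density lborel (gamma_density g))) = 1"
    by simp
qed

lemma Lam_int:
  assumes g: "\<And>j. j < Suc n \<Longrightarrow> 0 < g j"
    and f: "\<And>j. j < Suc n \<Longrightarrow> f j \<in> borel_measurable borel"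
  shows "(\<integral>\<^sup>+l. (\<Prod>j<Suc n. f j (l j)) \<partial>Lam_law n g)
       = (\<Prod>j<Suc n. \<integral>\<^sup>+a. f j a \<partial>density lborel (gamma_density (g j)))"
proof -
  define Gm where "Gm j = (if j < Suc n then density lborel (gamma_density (g j)) else lborel)" for j
  have L: "Lam_law n g = PiM {..<Suc n} Gm"
    unfolding Lam_law_def Gm_def by (rule PiM_cong) auto
  have sf: "sigma_finite_measure (Gm j)" for j
  proof (cases "j < Suc n")
    case True
    then interpret prob_space "Gm j" using gam_prob[OF g[OF True]] by (simp add: Gm_def)
    show ?thesis by unfold_locales
  next
    case False
    then show ?thesis by (simp add: Gm_def lborel.sigma_finite_measure_axioms)
  qed
  interpret product_sigma_finite Gm by (simp add: product_sigma_finite_def sf)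
  have "(\<integral>\<^sup>+l. (\<Prod>j<Suc n. f j (l j)) \<partial>Lam_law n g) = (\<Prod>j<Suc n. integral\<^sup>N (Gm j) (f j))"
    unfolding L
  proof (rule product_nn_integral_prod)
    fix j assume "j \<in> {..<Suc n}"
    then show "f j \<in> borel_measurable (Gm j)"
      using f[of j] by (simp add: Gm_def)
  qed simp
  also have "\<dots> = (\<Prod>j<Suc n. \<integral>\<^sup>+a. f j a \<partial>density lborel (gamma_density (g j)))"
    by (rule prod.cong) (auto simp: Gm_def)
  finally show ?thesis .
qed



theorem theorem4p1:
  fixes M :: "'a measure" and n :: nat
    and c :: "nat \<Rightarrow> nat \<Rightarrow> real" and \<sigma> \<gamma> :: "nat \<Rightarrow> real"
    and Lam :: "'a \<Rightarrow> nat \<Rightarrow> real" and W :: "'a \<Rightarrow> nat \<Rightarrow> nat \<Rightarrow> real"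
    and X :: "nat \<Rightarrow> 'a \<Rightarrow> real" and x :: "nat \<Rightarrow> real"
  assumes "prob_space M"
    and c01: "\<And>i j. i < n \<Longrightarrow> j < Suc n \<Longrightarrow> c i j \<in> {0, 1}"
    and \<sigma>_pos: "\<And>i. i < n \<Longrightarrow> \<sigma> i > 0"
    and \<gamma>_pos: "\<And>j. j < Suc n \<Longrightarrow> \<gamma> j > 0"
    and row_pos: "\<And>i. i < n \<Longrightarrow> (\<Sum>j<Suc n. c i j * \<gamma> j) > 0"
    and meas: "(\<lambda>\<omega>. (\<lambda>j\<in>{..<Suc n}. Lam \<omega> j, \<lambda>(i, j)\<in>{..<n} \<times> {..<Suc n}. W \<omega> i j))
                 \<in> M \<rightarrow>\<^sub>M (Lam_space n \<Otimes>\<^sub>M W_space n)"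
    and law: "distr M (Lam_space n \<Otimes>\<^sub>M W_space n)
                (\<lambda>\<omega>. (\<lambda>j\<in>{..<Suc n}. Lam \<omega> j, \<lambda>(i, j)\<in>{..<n} \<times> {..<Suc n}. W \<omega> i j))
              = joint_law n \<gamma>"
    and X_def: "\<And>i \<omega>. i < n \<Longrightarrow>
                 X i \<omega> = \<sigma> i * Min {W \<omega> i j | j. j < Suc n \<and> c i j \<noteq> 0}"
    and x_pos: "\<And>i. i < n \<Longrightarrow> x i > 0"
  shows "measure M {\<omega> \<in> space M. \<forall>i<n. X i \<omega> > x i}
           = (\<Prod>j<Suc n. (1 + (\<Sum>i<n. c i j / \<sigma> i * x i)) powr (- \<gamma> j))"
proof -
  define I where "I = {..<n} \<times> {..<Suc n}"
  define t where "t i = x i / \<sigma> i" for i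
  define S where "S k = (if c (fst k) (snd k) \<noteq> 0 then {t (fst k)<..} else UNIV)" for k
  define F where "F = (\<lambda>\<omega>. (\<lambda>j\<in>{..<Suc n}. Lam \<omega> j, \<lambda>(i, j)\<in>{..<n} \<times> {..<Suc n}. W \<omega> i j))"
  define B where "B = space (Lam_space n) \<times> Pi\<^sub>E I S"
  define K where "K = (\<lambda>l. distr (W_kernel n l) (Lam_space n \<Otimes>\<^sub>M W_space n) (\<lambda>w. (l, w)))"
  define s where "s j = (\<Sum>i<n. c i j / \<sigma> i * x i)" for j
  have S_sets: "S k \<in> sets borel" for k by (simp add: S_def)
  have PS: "Pi\<^sub>E I S \<in> sets (W_space n)"
    unfolding W_space_def I_def by (rule sets_PiM_I_finite) (auto simp: S_sets)
  have B_sets: "B \<in> sets (Lam_space n \<Otimes>\<^sub>M W_space n)"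
    unfolding B_def using PS by (intro pair_measureI) auto
  have Min_iff: "X i \<omega> > x i \<longleftrightarrow> (\<forall>j<Suc n. c i j \<noteq> 0 \<longrightarrow> W \<omega> i j > t i)" if i: "i < n" for i \<omega>
  proof -
    have ne: "{W \<omega> i j | j. j < Suc n \<and> c i j \<noteq> 0} \<noteq> {}"
    proof
      assume "{W \<omega> i j | j. j < Suc n \<and> c i j \<noteq> 0} = {}"
      then have "\<forall>j<Suc n. c i j = 0" by blast
      then have "(\<Sum>j<Suc n. c i j * \<gamma> j) = 0" by simp
      with row_pos[OF i] show False by simp
    qed
    have fin: "finite {W \<omega> i j | j. j < Suc n \<and> c i j \<noteq> 0}" by simp
    have "X i \<omega> > x i \<longleftrightarrow> Min {W \<omega> i j | j. j < Suc n \<and> c i j \<noteq> 0} > t i"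
      using \<sigma>_pos[OF i] by (simp add: X_def[OF i] t_def pos_divide_less_eq mult.commute)
    also have "\<dots> \<longleftrightarrow> (\<forall>j<Suc n. c i j \<noteq> 0 \<longrightarrow> W \<omega> i j > t i)"
      using Min_gr_iff[OF fin ne] by blast
    finally show ?thesis .
  qed
  have ev: "{\<omega> \<in> space M. \<forall>i<n. X i \<omega> > x i} = F -` B \<inter> space M"
  proof -
    have "F \<omega> \<in> B \<longleftrightarrow> (\<forall>i<n. X i \<omega> > x i)" for \<omega>
    proof -
      have "fst (F \<omega>) \<in> space (Lam_space n)"
        by (simp add: F_def Lam_space_def space_PiM)
      moreover have "snd (F \<omega>) \<in> Pi\<^sub>E I S \<longleftrightarrow> (\<forall>i<n. \<forall>j<Suc n. c i j \<noteq> 0 \<longrightarrow> W \<omega> i j > t i)"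
        by (auto simp: F_def I_def S_def PiE_iff)
      ultimately show ?thesis using Min_iff by (auto simp: B_def mem_Times_iff)
    qed
    then show ?thesis by blast
  qed
  have m1: "measure M {\<omega> \<in> space M. \<forall>i<n. X i \<omega> > x i} = measure (joint_law n \<gamma>) B"
    unfolding ev law[symmetric, folded F_def] using meas[folded F_def] B_sets
    by (simp add: measure_distr)
  have spL: "space (Lam_law n \<gamma>) = space (Lam_space n)"
    by (rule sets_eq_imp_space_eq[OF sets_Lam])
  have "emeasure (joint_law n \<gamma>) B = (\<integral>\<^sup>+l. emeasure (K l) B \<partial>Lam_law n \<gamma>)"
    unfolding joint_law_def K_def
  proof (rule emeasure_bind[OF _ K_meas B_sets])
    show "space (Lam_law n \<gamma>) \<noteq> {}" unfolding spL by (simp add: Lam_space_def space_PiM PiE_eq_empty_iff)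
  qed
  also have "\<dots> = (\<integral>\<^sup>+l. (\<Prod>j<Suc n. (\<Prod>i<n. emeasure (EE (l j)) (S (i, j)))) \<partial>Lam_law n \<gamma>)"
  proof (rule nn_integral_cong)
    fix l assume l: "l \<in> space (Lam_law n \<gamma>)"
    have mp: "(\<lambda>w. (l, w)) \<in> measurable (W_kernel n l) (Lam_space n \<Otimes>\<^sub>M W_space n)"
    proof (rule measurable_Pair)
      show "(\<lambda>w. l) \<in> measurable (W_kernel n l) (Lam_space n)" using l spL by simp
      show "(\<lambda>w. w) \<in> measurable (W_kernel n l) (W_space n)" by (rule measurable_ident_sets[OF sets_WK])
    qed
    have spW: "space (W_kernel n l) = space (W_space n)" by (rule sets_eq_imp_space_eq[OF sets_WK])
    have PSs: "Pi\<^sub>E I S \<subseteq> space (W_space n)" using PS by (rule sets.sets_into_space)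
    have "emeasure (K l) B = emeasure (W_kernel n l) ((\<lambda>w. (l, w)) -` B \<inter> space (W_kernel n l))"
      unfolding K_def by (rule emeasure_distr[OF mp B_sets])
    also have "(\<lambda>w. (l, w)) -` B \<inter> space (W_kernel n l) = Pi\<^sub>E I S"
      using l spL PSs spW by (auto simp: B_def)
    also have "emeasure (W_kernel n l) (Pi\<^sub>E I S) = (\<Prod>k\<in>I. emeasure (EE (l (snd k))) (S k))"
      unfolding I_def by (rule WK_box) (simp add: S_sets)
    also have "\<dots> = (\<Prod>i<n. \<Prod>j<Suc n. emeasure (EE (l j)) (S (i, j)))"
      unfolding I_def prod.cartesian_product by (rule prod.cong) auto
    also have "\<dots> = (\<Prod>j<Suc n. \<Prod>i<n. emeasure (EE (l j)) (S (i, j)))"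
      by (rule prod.swap)
    finally show "emeasure (K l) B = (\<Prod>j<Suc n. \<Prod>i<n. emeasure (EE (l j)) (S (i, j)))" .
  qed
  also have "\<dots> = (\<Prod>j<Suc n. \<integral>\<^sup>+a. (\<Prod>i<n. emeasure (EE a) (S (i, j))) \<partial>density lborel (gamma_density (\<gamma> j)))"
    by (rule Lam_int[OF \<gamma>_pos]) (auto intro!: borel_measurable_prod_ennreal EE_meas simp: S_sets)
  also have "\<dots> = (\<Prod>j<Suc n. ennreal ((1 + s j) powr (- \<gamma> j)))"
  proof (rule prod.cong[OF refl])
    fix j assume j: "j \<in> {..<Suc n}"
    have s0: "0 \<le> s j" unfolding s_def
    proof (rule sum_nonneg)
      fix i assume i: "i \<in> {..<n}"
      then have "0 \<le> c i j" using c01[of i j] j by auto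
      then show "0 \<le> c i j / \<sigma> i * x i" using \<sigma>_pos[of i] x_pos[of i] i by simp
    qed
    have "(\<integral>\<^sup>+a. (\<Prod>i<n. emeasure (EE a) (S (i, j))) \<partial>density lborel (gamma_density (\<gamma> j)))
        = (\<integral>\<^sup>+a. ennreal (gamma_density (\<gamma> j) a) * (\<Prod>i<n. emeasure (EE a) (S (i, j))) \<partial>lborel)"
      by (rule nn_integral_density) (auto simp: gamma_density_def intro!: borel_measurable_prod_ennreal EE_meas S_sets)
    also have "\<dots> = (\<integral>\<^sup>+a. ennreal (gamma_density (\<gamma> j) a) * ennreal (if 0 < a then exp (- a * s j) else 0) \<partial>lborel)"
    proof (rule nn_integral_cong)
      fix a :: real
      show "ennreal (gamma_density (\<gamma> j) a) * (\<Prod>i<n. emeasure (EE a) (S (i, j)))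
          = ennreal (gamma_density (\<gamma> j) a) * ennreal (if 0 < a then exp (- a * s j) else 0)"
      proof (cases "0 < a")
        case False
        then show ?thesis by (simp add: gamma_density_def)
      next
        case True
        have "(\<Prod>i<n. emeasure (EE a) (S (i, j))) = (\<Prod>i<n. ennreal (exp (- a * (c i j / \<sigma> i * x i))))"
        proof (rule prod.cong[OF refl])
          fix i assume i: "i \<in> {..<n}"
          have ti: "0 \<le> t i" using \<sigma>_pos[of i] x_pos[of i] i by (simp add: t_def)
          show "emeasure (EE a) (S (i, j)) = ennreal (exp (- a * (c i j / \<sigma> i * x i)))"
          proof (cases "c i j = 0")
            case True
            then show ?thesis
              using prob_space.emeasure_space_1[OF prob_space_exponential_density[OF \<open>0 < a\<close>]]
              by (simp add: S_def)
          next
            case False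
            then have "c i j = 1" using c01[of i j] i j by auto
            then show ?thesis using False EE_tail[OF True ti] by (simp add: S_def t_def)
          qed
        qed
        also have "\<dots> = ennreal (\<Prod>i<n. exp (- a * (c i j / \<sigma> i * x i)))"
          by (simp add: prod_ennreal)
        also have "(\<Prod>i<n. exp (- a * (c i j / \<sigma> i * x i))) = exp (- a * s j)"
          by (simp add: s_def exp_sum[symmetric] sum_distrib_left sum_negf)
        finally show ?thesis using True by simp
      qed
    qed
    also have "\<dots> = ennreal ((1 + s j) powr (- \<gamma> j))"
      by (rule gamma_mgf[OF \<gamma>_pos s0]) (use j in auto)
    finally show "(\<integral>\<^sup>+a. (\<Prod>i<n. emeasure (EE a) (S (i, j))) \<partial>density lborel (gamma_density (\<gamma> j)))
        = ennreal ((1 + s j) powr (- \<gamma> j))" .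
  qed
  also have "\<dots> = ennreal (\<Prod>j<Suc n. (1 + s j) powr (- \<gamma> j))"
    by (rule prod_ennreal) simp
  finally have "emeasure (joint_law n \<gamma>) B = ennreal (\<Prod>j<Suc n. (1 + s j) powr (- \<gamma> j))" .
  then have "measure (joint_law n \<gamma>) B = (\<Prod>j<Suc n. (1 + s j) powr (- \<gamma> j))"
    by (simp add: measure_def prod_nonneg)
  with m1 show ?thesis by (simp add: s_def)
qed

end
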